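(* Let $(X,d)$ be a complete metric space, $\lambda$ a convex mean on $X$, and $\nu$ a 2-mean on $X$ that is nonexpansive and coordinatewise $\rho'$-contractive for some $0<\rho'<1$. Then the iterated composition $\lambda*\nu$ (resp. the skewed iterated composition $\lambda*_s\nu$) exists and is nonexpansive and coordinatewise $\rho$-contractive, where $\rho=\max\{1/2,\rho'\}$; hence it $\beta$-extends to all orders greater than two (there are $n$-means $\mu_n$, $n\ge3$, with $\mu_3$ a $\beta$-extension of it and $\mu_{n+1}$ a $\beta$-extension of $\mu_n$).
   Context: A $k$-mean is a map $\mu:X^k\to X$ with $\mu(x,\ldots,x)=x$. A convex mean is a symmetric 2-mean $\lambda$ with $d(\lambda(x,z),\lambda(y,z))\le\frac12 d(x,y)$. Nonexpansive: $d(\mu(\mathbf{x}),\mu(\mathbf{y}))\le\max_j d(x_j,y_j)$; coordinatewise $\rho$-contractive: $d(\mu(\mathbf{x}),\mu(\mathbf{y}))\le\rho\,d(x_j,y_j)$ whenever $\mathbf{x},\mathbf{y}$ differ only in coordinate $j$. Iterated composition: $\lambda_1=\lambda$, $\nu_1=\nu$, $\lambda_{n+1}(x,y)=\lambda(\lambda_n(x,y),\nu_n(x,y))$, $\nu_{n+1}(x,y)=\nu(\lambda_n(x,y),\nu_n(x,y))$; skewed: $\nu_{n+1}(x,y)=\nu(\lambda_n(x,y),\nu_n(x,y))$, $\lambda_{n+1}(x,y)=\lambda(\lambda_n(x,y),\nu_{n+1}(x,y))$; the (skewed) iterated composition is the 2-mean $\mu(x,y)=\lim_n\lambda_n(x,y)=\lim_n\nu_n(x,y)$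 when these limits exist and agree. Barycentric operator of a $k$-mean: $\beta(\mathbf{x})_j=\mu(x_1,\ldots,\widehat{x_j},\ldots,x_{k+1})$; a $(k+1)$-mean $\nu'$ $\beta$-extends $\mu$ if $\beta^m(\mathbf{x})\to(\nu'(\mathbf{x}),\ldots,\nu'(\mathbf{x}))$ for all $\mathbf{x}$. *)

theory Defs
  imports "HOL-Analysis.Analysis"
begin

(* A complete metric space is modelled by a type of class complete_space. *)

definition mean2 :: "('a \<Rightarrow> 'a \<Rightarrow> 'a) \<Rightarrow> bool" where
  "mean2 mu \<longleftrightarrow> (\<forall>x. mu x x = x)"

definition convex_mean :: "('a::metric_space \<Rightarrow> 'a \<Rightarrow> 'a) \<Rightarrow> bool" where
  "convex_mean lam \<longleftrightarrow> mean2 lam \<and> (\<forall>x y. lam x y = lam y x) \<and>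
     (\<forall>x y z. dist (lam x z) (lam y z) \<le> dist x y / 2)"

definition nonexpansive2 :: "('a::metric_space \<Rightarrow> 'a \<Rightarrow> 'a) \<Rightarrow> bool" where
  "nonexpansive2 mu \<longleftrightarrow>
     (\<forall>x1 x2 y1 y2. dist (mu x1 x2) (mu y1 y2) \<le> max (dist x1 y1) (dist x2 y2))"

definition coord_contractive2 :: "real \<Rightarrow> ('a::metric_space \<Rightarrow> 'a \<Rightarrow> 'a) \<Rightarrow> bool" where
  "coord_contractive2 \<rho> mu \<longleftrightarrow>
     (\<forall>x y z. dist (mu x z) (mu y z) \<le> \<rho> * dist x y \<and> dist (mu z x) (mu z y) \<le> \<rho> * dist x y)"

(* itcomp lam nu n x y = (lambda_{n+1}(x,y), nu_{n+1}(x,y)) *)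
fun itcomp :: "('a \<Rightarrow> 'a \<Rightarrow> 'a) \<Rightarrow> ('a \<Rightarrow> 'a \<Rightarrow> 'a) \<Rightarrow> nat \<Rightarrow> 'a \<Rightarrow> 'a \<Rightarrow> 'a \<times> 'a" where
  "itcomp lam nu 0 x y = (lam x y, nu x y)"
| "itcomp lam nu (Suc n) x y =
     (case itcomp lam nu n x y of (a, b) \<Rightarrow> (lam a b, nu a b))"

fun itcomp_skew :: "('a \<Rightarrow> 'a \<Rightarrow> 'a) \<Rightarrow> ('a \<Rightarrow> 'a \<Rightarrow> 'a) \<Rightarrow> nat \<Rightarrow> 'a \<Rightarrow> 'a \<Rightarrow> 'a \<times> 'a" where
  "itcomp_skew lam nu 0 x y = (lam x y, nu x y)"
| "itcomp_skew lam nu (Suc n) x y =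
     (case itcomp_skew lam nu n x y of (a, b) \<Rightarrow> (lam a (nu a b), nu a b))"

definition is_iter_limit :: "(nat \<Rightarrow> 'a \<Rightarrow> 'a \<Rightarrow> 'a \<times> 'a) \<Rightarrow> ('a::topological_space \<Rightarrow> 'a \<Rightarrow> 'a) \<Rightarrow> bool" where
  "is_iter_limit s mu \<longleftrightarrow>
     (\<forall>x y. (\<lambda>n. fst (s n x y)) \<longlonglongrightarrow> mu x y \<and> (\<lambda>n. snd (s n x y)) \<longlonglongrightarrow> mu x y)"

(* k-means as functions on lists of length k *)
definition kmean :: "nat \<Rightarrow> ('a list \<Rightarrow> 'a) \<Rightarrow> bool" where
  "kmean k mu \<longleftrightarrow> (\<forall>x. mu (replicate k x) = x)"

definition barycentric :: "nat \<Rightarrow> ('a list \<Rightarrow> 'a) \<Rightarrow> 'a list \<Rightarrow> 'a list" where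
  "barycentric k mu xs = map (\<lambda>j. mu (take j xs @ drop (Suc j) xs)) [0..<Suc k]"

definition beta_extends :: "nat \<Rightarrow> ('a::topological_space list \<Rightarrow> 'a) \<Rightarrow> ('a list \<Rightarrow> 'a) \<Rightarrow> bool" where
  "beta_extends k mu nu' \<longleftrightarrow> kmean (Suc k) nu' \<and>
     (\<forall>xs. length xs = Suc k \<longrightarrow>
        (\<forall>j<Suc k. (\<lambda>m. ((barycentric k mu ^^ m) xs) ! j) \<longlonglongrightarrow> nu' xs))"

definition list_of_mean2 :: "('a \<Rightarrow> 'a \<Rightarrow> 'a) \<Rightarrow> 'a list \<Rightarrow> 'a" where
  "list_of_mean2 mu xs = mu (xs ! 0) (xs ! 1)"

definition beta_extends_all :: "('a::topological_space \<Rightarrow> 'a \<Rightarrow> 'a) \<Rightarrow> bool" where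
  "beta_extends_all mu \<longleftrightarrow> (\<exists>M :: nat \<Rightarrow> 'a list \<Rightarrow> 'a.
     beta_extends 2 (list_of_mean2 mu) (M 3) \<and>
     (\<forall>n\<ge>3. beta_extends n (M n) (M (Suc n))))"

end

theory Submission
  imports Defs
begin

lemma dist_chain:
  fixes f :: "nat \<Rightarrow> 'a::metric_space"
  assumes "m \<le> n"
  shows "dist (f m) (f n) \<le> (\<Sum>t\<in>{m..<n}. dist (f t) (f (Suc t)))"
  using assms
proof (induction n rule: dec_induct)
  case base then show ?case by simp
next
  case (step n)
  have "dist (f m) (f (Suc n)) \<le> dist (f m) (f n) + dist (f n) (f (Suc n))"
    by (rule dist_triangle)
  also have "\<dots> \<le> (\<Sum>t\<in>{m..<n}. dist (f t) (f (Suc t))) + dist (f n) (f (Suc n))"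
    using step.IH by simp
  also have "\<dots> = (\<Sum>t\<in>{m..<Suc n}. dist (f t) (f (Suc t)))"
    using step.hyps by simp
  finally show ?case .
qed

lemma geom_sum_le:
  fixes r :: real
  assumes "0 \<le> r" "r < 1" "m \<le> n"
  shows "(\<Sum>t\<in>{m..<n}. r ^ t) * (1 - r) = r ^ m - r ^ n"
  using assms(3)
proof (induction n rule: dec_induct)
  case base then show ?case by simp
next
  case (step n)
  have "(\<Sum>t\<in>{m..<Suc n}. r ^ t) = (\<Sum>t\<in>{m..<n}. r ^ t) + r ^ n"
    using step.hyps by simp
  then have "(\<Sum>t\<in>{m..<Suc n}. r ^ t) * (1 - r) = (\<Sum>t\<in>{m..<n}. r ^ t) * (1 - r) + r ^ n * (1 - r)"
    by (simp add: algebra_simps)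
  then show ?case using step.IH by (simp add: algebra_simps)
qed

lemma geom_cauchy:
  fixes f :: "nat \<Rightarrow> 'a::metric_space" and C r :: real
  assumes le: "\<And>n. dist (f n) (f (Suc n)) \<le> C * r ^ n" and r: "0 \<le> r" "r < 1"
  shows "Cauchy f"
proof (rule metric_CauchyI)
  fix e :: real assume e: "0 < e"
  have C0: "0 \<le> C" using order_trans[OF zero_le_dist le[of 0]] by simp
  have bnd: "dist (f m) (f n) \<le> C * r ^ m / (1 - r)" if "m \<le> n" for m n
  proof -
    have "dist (f m) (f n) \<le> (\<Sum>t\<in>{m..<n}. dist (f t) (f (Suc t)))"
      using dist_chain that by blast
    also have "\<dots> \<le> (\<Sum>t\<in>{m..<n}. C * r ^ t)"
      by (rule sum_mono) (use le in auto)
    also have "\<dots> = C * (\<Sum>t\<in>{m..<n}. r ^ t)" by (simp add: sum_distrib_left)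
    also have "(\<Sum>t\<in>{m..<n}. r ^ t) = (r ^ m - r ^ n) / (1 - r)"
      using geom_sum_le[OF r that] r by (simp add: field_simps)
    also have "\<dots> \<le> r ^ m / (1 - r)"
      using r by (simp add: divide_right_mono)
    finally show ?thesis using C0 by (simp add: mult_left_mono)
  qed
  have "(\<lambda>n. C / (1 - r) * r ^ n) \<longlonglongrightarrow> C / (1 - r) * 0"
    by (intro tendsto_mult tendsto_const LIMSEQ_power_zero) (use r in auto)
  then have "\<forall>\<^sub>F n in sequentially. C / (1 - r) * r ^ n < e"
    using e by (auto dest: order_tendstoD(2))
  then obtain N where N: "C / (1 - r) * r ^ N < e"
    by (auto simp: eventually_sequentially)
  have mono: "C * r ^ m / (1 - r) \<le> C / (1 - r) * r ^ N" if "N \<le> m" for m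
  proof -
    have "r ^ m \<le> r ^ N" using r that by (simp add: power_decreasing)
    moreover have "0 \<le> C / (1 - r)" using C0 r by simp
    ultimately have "C / (1 - r) * r ^ m \<le> C / (1 - r) * r ^ N" by (rule mult_left_mono)
    then show ?thesis by simp
  qed
  show "\<exists>M. \<forall>m\<ge>M. \<forall>n\<ge>M. dist (f m) (f n) < e"
  proof (intro exI allI impI)
    fix m n assume "N \<le> m" "N \<le> n"
    show "dist (f m) (f n) < e"
    proof (cases "m \<le> n")
      case True
      then show ?thesis using bnd[OF True] mono[OF \<open>N \<le> m\<close>] N by linarith
    next
      case False
      then have "n \<le> m" by simp
      then show ?thesis using bnd[OF \<open>n \<le> m\<close>] mono[OF \<open>N \<le> n\<close>] N
        by (simp add: dist_commute)
    qed
  qed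
qed

lemma geom_conv:
  fixes f :: "nat \<Rightarrow> 'a::complete_space" and C r :: real
  assumes "\<And>n. dist (f n) (f (Suc n)) \<le> C * r ^ n" "0 \<le> r" "r < 1"
  shows "convergent f"
  using geom_cauchy[OF assms] Cauchy_convergent by blast

lemma pair_conv:
  fixes a b :: "nat \<Rightarrow> 'a::complete_space" and r :: real
  assumes D: "\<And>n. dist (a (Suc n)) (b (Suc n)) \<le> r * dist (a n) (b n)"
    and A: "\<And>n. dist (a (Suc n)) (a n) \<le> dist (a n) (b n)"
    and B: "\<And>n. dist (b (Suc n)) (b n) \<le> dist (a n) (b n)"
    and r: "0 \<le> r" "r < 1"
  shows "\<exists>l. a \<longlonglongrightarrow> l \<and> b \<longlonglongrightarrow> l"
proof -
  have Dn: "dist (a n) (b n) \<le> dist (a 0) (b 0) * r ^ n" for n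
  proof (induction n)
    case 0 then show ?case by simp
  next
    case (Suc n)
    have "dist (a (Suc n)) (b (Suc n)) \<le> r * dist (a n) (b n)" by (rule D)
    also have "\<dots> \<le> r * (dist (a 0) (b 0) * r ^ n)" using Suc r by (simp add: mult_left_mono)
    finally show ?case by (simp add: algebra_simps)
  qed
  have "convergent a"
    by (rule geom_conv[of _ "dist (a 0) (b 0)" r]) (use A Dn r in \<open>auto simp: dist_commute intro: order_trans\<close>)
  then obtain la where la: "a \<longlonglongrightarrow> la" by (auto simp: convergent_def)
  have "convergent b"
    by (rule geom_conv[of _ "dist (a 0) (b 0)" r]) (use B Dn r in \<open>auto simp: dist_commute intro: order_trans\<close>)
  then obtain lb where lb: "b \<longlonglongrightarrow> lb" by (auto simp: convergent_def)
  have t1: "(\<lambda>n. dist (a n) (b n)) \<longlonglongrightarrow> dist la lb" by (intro tendsto_dist la lb)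
  have "(\<lambda>n. dist (a 0) (b 0) * r ^ n) \<longlonglongrightarrow> dist (a 0) (b 0) * 0"
    by (intro tendsto_mult tendsto_const LIMSEQ_power_zero) (use r in auto)
  then have h0: "(\<lambda>n. dist (a 0) (b 0) * r ^ n) \<longlonglongrightarrow> 0" by simp
  have t2: "(\<lambda>n. dist (a n) (b n)) \<longlonglongrightarrow> 0"
    by (rule tendsto_sandwich[OF _ _ tendsto_const h0]) (use Dn in auto)
  have "dist la lb = 0" using LIMSEQ_unique[OF t1 t2] .
  then have "la = lb" by simp
  then show ?thesis using la lb by blast
qed

lemma convex_nonexp:
  assumes "convex_mean lam" shows "nonexpansive2 lam"
  unfolding nonexpansive2_def
proof (intro allI)
  fix x1 x2 y1 y2
  have c: "\<And>x y z. dist (lam x z) (lam y z) \<le> dist x y / 2" and s: "\<And>x y. lam x y = lam y x"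
    using assms by (auto simp: convex_mean_def)
  have "dist (lam x1 x2) (lam y1 y2) \<le> dist (lam x1 x2) (lam y1 x2) + dist (lam y1 x2) (lam y1 y2)"
    by (rule dist_triangle)
  also have "dist (lam y1 x2) (lam y1 y2) = dist (lam x2 y1) (lam y2 y1)" by (simp add: s)
  finally have "dist (lam x1 x2) (lam y1 y2) \<le> dist x1 y1 / 2 + dist x2 y2 / 2"
    using c[of x1 x2 y1] c[of x2 y1 y2] by linarith
  then show "dist (lam x1 x2) (lam y1 y2) \<le> max (dist x1 y1) (dist x2 y2)" by linarith
qed

lemma convex_cc:
  assumes "convex_mean lam" shows "coord_contractive2 (1/2) lam"
  unfolding coord_contractive2_def
proof (intro allI conjI)
  fix x y z
  have c: "\<And>x y z. dist (lam x z) (lam y z) \<le> dist x y / 2" and s: "\<And>x y. lam x y = lam y x"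
    using assms by (auto simp: convex_mean_def)
  show "dist (lam x z) (lam y z) \<le> 1 / 2 * dist x y" using c[of x z y] by simp
  show "dist (lam z x) (lam z y) \<le> 1 / 2 * dist x y" using c[of x z y] s[of z x] s[of z y] by simp
qed

lemma cc_mono:
  fixes f :: "'a::metric_space \<Rightarrow> 'a \<Rightarrow> 'a"
  assumes "coord_contractive2 r f" "r \<le> r'" shows "coord_contractive2 r' f"
  unfolding coord_contractive2_def
proof (intro allI conjI)
  fix x y z :: 'a
  have "r * dist x y \<le> r' * dist x y" using assms(2) by (simp add: mult_right_mono)
  then show "dist (f x z) (f y z) \<le> r' * dist x y" "dist (f z x) (f z y) \<le> r' * dist x y"
    using assms(1) unfolding coord_contractive2_def by (meson order_trans)+
qed

lemma comp_nonexp: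
  assumes "nonexpansive2 h" "nonexpansive2 f" "nonexpansive2 g"
  shows "nonexpansive2 (\<lambda>x y. h (f x y) (g x y))"
  unfolding nonexpansive2_def
proof (intro allI)
  fix x1 x2 y1 y2
  have "dist (h (f x1 x2) (g x1 x2)) (h (f y1 y2) (g y1 y2))
      \<le> max (dist (f x1 x2) (f y1 y2)) (dist (g x1 x2) (g y1 y2))"
    using assms(1) by (simp add: nonexpansive2_def)
  also have "\<dots> \<le> max (dist x1 y1) (dist x2 y2)"
    using assms(2,3) by (simp add: nonexpansive2_def)
  finally show "dist (h (f x1 x2) (g x1 x2)) (h (f y1 y2) (g y1 y2)) \<le> max (dist x1 y1) (dist x2 y2)" .
qed

lemma comp_cc:
  assumes "nonexpansive2 h" "coord_contractive2 r f" "coord_contractive2 r g"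
  shows "coord_contractive2 r (\<lambda>x y. h (f x y) (g x y))"
  unfolding coord_contractive2_def
proof (intro allI conjI)
  fix x y z
  have "dist (h (f x z) (g x z)) (h (f y z) (g y z))
      \<le> max (dist (f x z) (f y z)) (dist (g x z) (g y z))"
    using assms(1) by (simp add: nonexpansive2_def)
  also have "\<dots> \<le> r * dist x y"
    using assms(2,3) by (simp add: coord_contractive2_def)
  finally show "dist (h (f x z) (g x z)) (h (f y z) (g y z)) \<le> r * dist x y" .
  have "dist (h (f z x) (g z x)) (h (f z y) (g z y))
      \<le> max (dist (f z x) (f z y)) (dist (g z x) (g z y))"
    using assms(1) by (simp add: nonexpansive2_def)
  also have "\<dots> \<le> r * dist x y"
    using assms(2,3) by (simp add: coord_contractive2_def)
  finally show "dist (h (f z x) (g z x)) (h (f z y) (g z y)) \<le> r * dist x y" .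
qed

lemma itcomp_Suc':
  "itcomp lam nu (Suc n) x y =
    (lam (fst (itcomp lam nu n x y)) (snd (itcomp lam nu n x y)),
     nu (fst (itcomp lam nu n x y)) (snd (itcomp lam nu n x y)))"
  by (simp split: prod.split)

lemma itcomp_skew_Suc':
  "itcomp_skew lam nu (Suc n) x y =
    (lam (fst (itcomp_skew lam nu n x y)) (nu (fst (itcomp_skew lam nu n x y)) (snd (itcomp_skew lam nu n x y))),
     nu (fst (itcomp_skew lam nu n x y)) (snd (itcomp_skew lam nu n x y)))"
  by (simp split: prod.split)

declare itcomp.simps(2)[simp del] itcomp_skew.simps(2)[simp del]

lemma itcomp_props:
  assumes "nonexpansive2 lam" "coord_contractive2 r lam" "nonexpansive2 nu" "coord_contractive2 r nu"
  shows "nonexpansive2 (\<lambda>x y. fst (itcomp lam nu n x y)) \<and> coord_contractive2 r (\<lambda>x y. fst (itcomp lam nu n x y))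
    \<and> nonexpansive2 (\<lambda>x y. snd (itcomp lam nu n x y)) \<and> coord_contractive2 r (\<lambda>x y. snd (itcomp lam nu n x y))"
proof (induction n)
  case 0 then show ?case using assms by simp
next
  case (Suc n)
  let ?F = "\<lambda>x y. fst (itcomp lam nu n x y)" and ?G = "\<lambda>x y. snd (itcomp lam nu n x y)"
  have IH: "nonexpansive2 ?F" "coord_contractive2 r ?F" "nonexpansive2 ?G" "coord_contractive2 r ?G"
    using Suc.IH by simp_all
  have "nonexpansive2 (\<lambda>x y. lam (?F x y) (?G x y))" by (rule comp_nonexp[OF assms(1) IH(1) IH(3)])
  moreover have "nonexpansive2 (\<lambda>x y. nu (?F x y) (?G x y))" by (rule comp_nonexp[OF assms(3) IH(1) IH(3)])
  moreover have "coord_contractive2 r (\<lambda>x y. lam (?F x y) (?G x y))" by (rule comp_cc[OF assms(1) IH(2) IH(4)])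
  moreover have "coord_contractive2 r (\<lambda>x y. nu (?F x y) (?G x y))" by (rule comp_cc[OF assms(3) IH(2) IH(4)])
  ultimately show ?case by (simp add: itcomp_Suc')
qed

lemma itcomp_skew_props:
  assumes "nonexpansive2 lam" "coord_contractive2 r lam" "nonexpansive2 nu" "coord_contractive2 r nu"
  shows "nonexpansive2 (\<lambda>x y. fst (itcomp_skew lam nu n x y)) \<and> coord_contractive2 r (\<lambda>x y. fst (itcomp_skew lam nu n x y))
    \<and> nonexpansive2 (\<lambda>x y. snd (itcomp_skew lam nu n x y)) \<and> coord_contractive2 r (\<lambda>x y. snd (itcomp_skew lam nu n x y))"
proof (induction n)
  case 0 then show ?case using assms by simp
next
  case (Suc n)
  let ?F = "\<lambda>x y. fst (itcomp_skew lam nu n x y)" and ?G = "\<lambda>x y. snd (itcomp_skew lam nu n x y)"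
  have IH: "nonexpansive2 ?F" "coord_contractive2 r ?F" "nonexpansive2 ?G" "coord_contractive2 r ?G"
    using Suc.IH by simp_all
  have g1: "nonexpansive2 (\<lambda>x y. nu (?F x y) (?G x y))" by (rule comp_nonexp[OF assms(3) IH(1) IH(3)])
  have g2: "coord_contractive2 r (\<lambda>x y. nu (?F x y) (?G x y))" by (rule comp_cc[OF assms(3) IH(2) IH(4)])
  have f1: "nonexpansive2 (\<lambda>x y. lam (?F x y) (nu (?F x y) (?G x y)))"
    by (rule comp_nonexp[OF assms(1) IH(1) g1])
  have f2: "coord_contractive2 r (\<lambda>x y. lam (?F x y) (nu (?F x y) (?G x y)))"
    by (rule comp_cc[OF assms(1) IH(2) g2])
  show ?case using f1 f2 g1 g2 by (simp add: itcomp_skew_Suc')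
qed

lemma itcomp_diag: "mean2 lam \<Longrightarrow> mean2 nu \<Longrightarrow> itcomp lam nu n x x = (x, x)"
  by (induction n) (auto simp: mean2_def itcomp_Suc')

lemma itcomp_skew_diag: "mean2 lam \<Longrightarrow> mean2 nu \<Longrightarrow> itcomp_skew lam nu n x x = (x, x)"
  by (induction n) (auto simp: mean2_def itcomp_skew_Suc')

lemma limit_mean:
  fixes s :: "nat \<Rightarrow> 'a::complete_space \<Rightarrow> 'a \<Rightarrow> 'a \<times> 'a" and r r' :: real
  assumes D: "\<And>n x y. dist (fst (s (Suc n) x y)) (snd (s (Suc n) x y)) \<le> r' * dist (fst (s n x y)) (snd (s n x y))"
    and A: "\<And>n x y. dist (fst (s (Suc n) x y)) (fst (s n x y)) \<le> dist (fst (s n x y)) (snd (s n x y))"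
    and B: "\<And>n x y. dist (snd (s (Suc n) x y)) (snd (s n x y)) \<le> dist (fst (s n x y)) (snd (s n x y))"
    and r': "0 \<le> r'" "r' < 1"
    and P: "\<And>n. nonexpansive2 (\<lambda>x y. fst (s n x y)) \<and> coord_contractive2 r (\<lambda>x y. fst (s n x y))"
    and diag: "\<And>n x. fst (s n x x) = x"
  shows "\<exists>mu. is_iter_limit s mu \<and> mean2 mu \<and> nonexpansive2 mu \<and> coord_contractive2 r mu"
proof -
  have ex: "\<exists>l. (\<lambda>n. fst (s n x y)) \<longlonglongrightarrow> l \<and> (\<lambda>n. snd (s n x y)) \<longlonglongrightarrow> l" for x y
    by (rule pair_conv[where a="\<lambda>n. fst (s n x y)" and b="\<lambda>n. snd (s n x y)", OF D A B r'])
  define mu where "mu x y = lim (\<lambda>n. fst (s n x y))" for x y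
  have lim: "(\<lambda>n. fst (s n x y)) \<longlonglongrightarrow> mu x y \<and> (\<lambda>n. snd (s n x y)) \<longlonglongrightarrow> mu x y" for x y
    using ex[of x y] unfolding mu_def by (metis limI)
  have L: "(\<lambda>n. fst (s n x y)) \<longlonglongrightarrow> mu x y" for x y using lim by blast
  have f1: "is_iter_limit s mu" using lim by (simp add: is_iter_limit_def)
  have f2: "mean2 mu" unfolding mean2_def
  proof
    fix x show "mu x x = x" using L[of x x] diag by (simp add: LIMSEQ_const_iff)
  qed
  have Pn: "\<And>n. nonexpansive2 (\<lambda>x y. fst (s n x y))" and Pc: "\<And>n. coord_contractive2 r (\<lambda>x y. fst (s n x y))"
    using P by simp_all
  have n1: "dist (fst (s n x1 x2)) (fst (s n y1 y2)) \<le> max (dist x1 y1) (dist x2 y2)" for n x1 x2 y1 y2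
    using Pn[of n] unfolding nonexpansive2_def by simp
  have c1: "dist (fst (s n x z)) (fst (s n y z)) \<le> r * dist x y" for n x y z
    using Pc[of n] unfolding coord_contractive2_def by simp
  have c2: "dist (fst (s n z x)) (fst (s n z y)) \<le> r * dist x y" for n x y z
    using Pc[of n] unfolding coord_contractive2_def by simp
  have f3: "nonexpansive2 mu" unfolding nonexpansive2_def
  proof (intro allI)
    fix x1 x2 y1 y2
    have "(\<lambda>n. dist (fst (s n x1 x2)) (fst (s n y1 y2))) \<longlonglongrightarrow> dist (mu x1 x2) (mu y1 y2)"
      by (intro tendsto_dist L)
    then show "dist (mu x1 x2) (mu y1 y2) \<le> max (dist x1 y1) (dist x2 y2)"
      by (rule LIMSEQ_le_const2) (use n1 in blast)
  qed
  have f4: "coord_contractive2 r mu" unfolding coord_contractive2_def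
  proof (intro allI conjI)
    fix x y z
    have "(\<lambda>n. dist (fst (s n x z)) (fst (s n y z))) \<longlonglongrightarrow> dist (mu x z) (mu y z)"
      by (intro tendsto_dist L)
    then show "dist (mu x z) (mu y z) \<le> r * dist x y"
      by (rule LIMSEQ_le_const2) (use c1 in blast)
    have "(\<lambda>n. dist (fst (s n z x)) (fst (s n z y))) \<longlonglongrightarrow> dist (mu z x) (mu z y)"
      by (intro tendsto_dist L)
    then show "dist (mu z x) (mu z y) \<le> r * dist x y"
      by (rule LIMSEQ_le_const2) (use c2 in blast)
  qed
  show ?thesis using f1 f2 f3 f4 by (intro exI[of _ mu] conjI)
qed

definition lnonexp :: "nat \<Rightarrow> ('a::metric_space list \<Rightarrow> 'a) \<Rightarrow> bool" where
  "lnonexp k f \<longleftrightarrow> (\<forall>xs ys \<delta>. length xs = k \<longrightarrow> length ys = k \<longrightarrow>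
     (\<forall>i<k. dist (xs!i) (ys!i) \<le> \<delta>) \<longrightarrow> dist (f xs) (f ys) \<le> \<delta>)"

definition lcontr :: "nat \<Rightarrow> real \<Rightarrow> ('a::metric_space list \<Rightarrow> 'a) \<Rightarrow> bool" where
  "lcontr k r f \<longleftrightarrow> (\<forall>xs ys p. length xs = k \<longrightarrow> length ys = k \<longrightarrow> p < k \<longrightarrow>
     (\<forall>i<k. i \<noteq> p \<longrightarrow> xs!i = ys!i) \<longrightarrow> dist (f xs) (f ys) \<le> r * dist (xs!p) (ys!p))"

lemma lnonexpD:
  assumes "lnonexp k f" "length xs = k" "length ys = k" "\<And>i. i < k \<Longrightarrow> dist (xs!i) (ys!i) \<le> \<delta>"
  shows "dist (f xs) (f ys) \<le> \<delta>"
  by (rule assms(1)[unfolded lnonexp_def, rule_format, OF assms(2,3) assms(4)])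

lemma lcontrD:
  assumes "lcontr k r f" "length xs = k" "length ys = k" "p < k" "\<And>i. i < k \<Longrightarrow> i \<noteq> p \<Longrightarrow> xs!i = ys!i"
  shows "dist (f xs) (f ys) \<le> r * dist (xs!p) (ys!p)"
  by (rule assms(1)[unfolded lcontr_def, rule_format, OF assms(2,3,4) assms(5)])

definition good :: "nat \<Rightarrow> real \<Rightarrow> ('a::metric_space list \<Rightarrow> 'a) \<Rightarrow> bool" where
  "good k r f \<longleftrightarrow> kmean k f \<and> lnonexp k f \<and> lcontr k r f"

definition bext :: "nat \<Rightarrow> ('a::metric_space list \<Rightarrow> 'a) \<Rightarrow> 'a list \<Rightarrow> 'a" where
  "bext k mu xs = lim (\<lambda>m. (barycentric k mu ^^ m) xs ! 0)"

definition rem :: "nat \<Rightarrow> 'a list \<Rightarrow> 'a list" where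
  "rem j xs = take j xs @ drop (Suc j) xs"

lemma rem_length[simp]: "j < length xs \<Longrightarrow> length (rem j xs) = length xs - 1"
  by (simp add: rem_def)

lemma rem_nth: "j < length xs \<Longrightarrow> i < length xs - 1 \<Longrightarrow> rem j xs ! i = xs ! (if i < j then i else Suc i)"
  by (auto simp: rem_def nth_append min_def)

lemma bary_length: "length (barycentric k mu xs) = Suc k"
  by (simp add: barycentric_def)

lemma bary_nth: "j < Suc k \<Longrightarrow> barycentric k mu xs ! j = mu (rem j xs)"
  by (simp add: barycentric_def rem_def del: upt_Suc)

lemma bary_pow_length: "length xs = Suc k \<Longrightarrow> length ((barycentric k mu ^^ m) xs) = Suc k"
  by (induction m) (auto simp: bary_length)

lemma bary_nonexp:
  assumes "lnonexp k mu" "length xs = Suc k" "length ys = Suc k"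
    "\<forall>i<Suc k. dist (xs!i) (ys!i) \<le> \<delta>"
  shows "\<forall>j<Suc k. dist (barycentric k mu xs ! j) (barycentric k mu ys ! j) \<le> \<delta>"
proof (intro allI impI)
  fix j assume j: "j < Suc k"
  have l: "length (rem j xs) = k" "length (rem j ys) = k" using assms j by auto
  have d: "dist (rem j xs ! i) (rem j ys ! i) \<le> \<delta>" if "i < k" for i
  proof -
    note i = that
    define t where "t = (if i < j then i else Suc i)"
    have s: "t < Suc k" using i by (simp add: t_def)
    have "rem j xs ! i = xs ! t" "rem j ys ! i = ys ! t"
      using rem_nth[of j xs i] rem_nth[of j ys i] assms j i unfolding t_def by simp_all
    then show "dist (rem j xs ! i) (rem j ys ! i) \<le> \<delta>" using assms(4) s by simp
  qed
  have "dist (mu (rem j xs)) (mu (rem j ys)) \<le> \<delta>"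
    by (rule lnonexpD[OF assms(1) l d])
  then show "dist (barycentric k mu xs ! j) (barycentric k mu ys ! j) \<le> \<delta>"
    using j by (simp add: bary_nth)
qed

lemma bary_pow_nonexp:
  assumes "lnonexp k mu" "length xs = Suc k" "length ys = Suc k"
    "\<forall>i<Suc k. dist (xs!i) (ys!i) \<le> \<delta>"
  shows "\<forall>j<Suc k. dist ((barycentric k mu ^^ m) xs ! j) ((barycentric k mu ^^ m) ys ! j) \<le> \<delta>"
proof (induction m)
  case 0 then show ?case using assms by simp
next
  case (Suc m)
  have l: "length ((barycentric k mu ^^ m) xs) = Suc k" "length ((barycentric k mu ^^ m) ys) = Suc k"
    using assms by (simp_all add: bary_pow_length)
  show ?case using bary_nonexp[OF assms(1) l Suc.IH] by simp
qed

lemma bary_contr: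
  assumes "lcontr k r mu" "0 \<le> r" "length xs = Suc k" "length ys = Suc k" "p < Suc k"
    "\<forall>i<Suc k. i \<noteq> p \<longrightarrow> xs!i = ys!i"
  shows "\<forall>j<Suc k. dist (barycentric k mu xs ! j) (barycentric k mu ys ! j) \<le> r * dist (xs!p) (ys!p)"
proof (intro allI impI)
  fix j assume j: "j < Suc k"
  have "dist (mu (rem j xs)) (mu (rem j ys)) \<le> r * dist (xs!p) (ys!p)"
  proof (cases "j = p")
    case True
    have "rem j xs = rem j ys"
    proof (rule nth_equalityI)
      show "length (rem j xs) = length (rem j ys)" using assms j by simp
      fix i assume "i < length (rem j xs)"
      then have i: "i < k" using assms j by simp
      define t where "t = (if i < j then i else Suc i)"
      have s: "t < Suc k" "t \<noteq> p" using i True by (auto simp: t_def)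
      have "rem j xs ! i = xs ! t" "rem j ys ! i = ys ! t"
        using rem_nth[of j xs i] rem_nth[of j ys i] assms j i unfolding t_def by simp_all
      moreover have "xs ! t = ys ! t" using assms(6) s by blast
      ultimately show "rem j xs ! i = rem j ys ! i" by simp
    qed
    then show ?thesis using assms(2) by simp
  next
    case False
    define p' where "p' = (if p < j then p else p - 1)"
    have p': "p' < k" using False assms j by (auto simp: p'_def)
    have l: "length (rem j xs) = k" "length (rem j ys) = k" using assms j by auto
    have e: "rem j xs ! i = rem j ys ! i" if "i < k" "i \<noteq> p'" for i
    proof -
      define t where "t = (if i < j then i else Suc i)"
      have s: "t < Suc k" "t \<noteq> p" using that False j unfolding t_def p'_def by auto
      have "rem j xs ! i = xs ! t" "rem j ys ! i = ys ! t"
        using rem_nth[of j xs i] rem_nth[of j ys i] assms j that unfolding t_def by simp_all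
      moreover have "xs ! t = ys ! t" using assms(6) s by blast
      ultimately show ?thesis by simp
    qed
    have dd: "dist (mu (rem j xs)) (mu (rem j ys)) \<le> r * dist (rem j xs ! p') (rem j ys ! p')"
      by (rule lcontrD[OF assms(1) l p' e])
    have tp: "(if p' < j then p' else Suc p') = p" using False j p' unfolding p'_def by auto
    have e1: "rem j xs ! p' = xs ! p"
      using rem_nth[of j xs p'] assms(3) j p' unfolding tp by simp
    have e2: "rem j ys ! p' = ys ! p"
      using rem_nth[of j ys p'] assms(4) j p' unfolding tp by simp
    show ?thesis using dd unfolding e1 e2 .
  qed
  then show "dist (barycentric k mu xs ! j) (barycentric k mu ys ! j) \<le> r * dist (xs!p) (ys!p)"
    using j by (simp add: bary_nth)
qed

definition Lsum :: "nat \<Rightarrow> 'a::metric_space list \<Rightarrow> real" where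
  "Lsum k xs = (\<Sum>i<k. dist (xs!i) (xs!Suc i))"

lemma Lsum_nonneg: "0 \<le> Lsum k xs"
  by (simp add: Lsum_def sum_nonneg)

lemma bary_Lsum:
  assumes "lcontr k r mu" "length xs = Suc k"
  shows "Lsum k (barycentric k mu xs) \<le> r * Lsum k xs"
proof -
  have "dist (barycentric k mu xs ! i) (barycentric k mu xs ! Suc i) \<le> r * dist (xs!i) (xs!Suc i)"
    if i: "i < k" for i
  proof -
    have l: "length (rem i xs) = k" "length (rem (Suc i) xs) = k" using assms i by auto
    have e: "rem i xs ! i' = rem (Suc i) xs ! i'" if "i' < k" "i' \<noteq> i" for i'
      using rem_nth[of i xs i'] rem_nth[of "Suc i" xs i'] assms i that by auto
    have "dist (mu (rem i xs)) (mu (rem (Suc i) xs)) \<le> r * dist (rem i xs ! i) (rem (Suc i) xs ! i)"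
      by (rule lcontrD[OF assms(1) l i e])
    moreover have "rem i xs ! i = xs ! Suc i" "rem (Suc i) xs ! i = xs ! i"
      using rem_nth[of i xs i] rem_nth[of "Suc i" xs i] assms(2) i by simp_all
    ultimately show ?thesis using i by (simp add: bary_nth dist_commute)
  qed
  then have "Lsum k (barycentric k mu xs) \<le> (\<Sum>i<k. r * dist (xs!i) (xs!Suc i))"
    unfolding Lsum_def by (intro sum_mono) auto
  then show ?thesis by (simp add: Lsum_def sum_distrib_left)
qed

lemma dist_le_Lsum:
  assumes "length xs = Suc k" "i < Suc k" "j < Suc k"
  shows "dist (xs!i) (xs!j) \<le> Lsum k xs"
proof -
  have *: "dist (xs!i) (xs!j) \<le> Lsum k xs" if "i \<le> j" "j < Suc k" for i j
  proof -
    have "dist (xs!i) (xs!j) \<le> (\<Sum>t\<in>{i..<j}. dist (xs!t) (xs!Suc t))"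
      using dist_chain[of i j "\<lambda>t. xs!t"] that by simp
    also have "\<dots> \<le> (\<Sum>t\<in>{..<k}. dist (xs!t) (xs!Suc t))"
      by (rule sum_mono2) (use that in auto)
    finally show ?thesis by (simp add: Lsum_def)
  qed
  show ?thesis
  proof (cases "i \<le> j")
    case True then show ?thesis using * assms by blast
  next
    case False then show ?thesis using *[of j i] assms by (simp add: dist_commute)
  qed
qed

lemma bary_step:
  assumes "kmean k mu" "lnonexp k mu" "length xs = Suc k" "j < Suc k"
  shows "dist (barycentric k mu xs ! j) (xs ! j) \<le> Lsum k xs"
proof -
  have l: "length (rem j xs) = k" "length (replicate k (xs!j)) = k" using assms by auto
  have d: "dist (rem j xs ! i) (replicate k (xs ! j) ! i) \<le> Lsum k xs" if "i < k" for i
  proof -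
    define t where "t = (if i < j then i else Suc i)"
    have s: "t < Suc k" using that by (auto simp: t_def)
    have "rem j xs ! i = xs ! t" using rem_nth[of j xs i] assms that unfolding t_def by simp
    then show ?thesis using dist_le_Lsum[OF assms(3) s assms(4)] that by simp
  qed
  have "dist (mu (rem j xs)) (mu (replicate k (xs!j))) \<le> Lsum k xs"
    by (rule lnonexpD[OF assms(2) l d])
  then show ?thesis using assms by (simp add: bary_nth kmean_def)
qed

lemma bary_pow_Lsum:
  assumes "lcontr k r mu" "0 \<le> r" "length xs = Suc k"
  shows "Lsum k ((barycentric k mu ^^ m) xs) \<le> r ^ m * Lsum k xs"
proof (induction m)
  case 0 then show ?case by simp
next
  case (Suc m)
  have "Lsum k ((barycentric k mu ^^ Suc m) xs) = Lsum k (barycentric k mu ((barycentric k mu ^^ m) xs))"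
    by simp
  also have "\<dots> \<le> r * Lsum k ((barycentric k mu ^^ m) xs)"
    by (rule bary_Lsum[OF assms(1) bary_pow_length[OF assms(3)]])
  also have "\<dots> \<le> r * (r ^ m * Lsum k xs)"
    by (rule mult_left_mono[OF Suc.IH assms(2)])
  finally show ?case by (simp add: algebra_simps)
qed

lemma tendsto_close:
  fixes f g :: "nat \<Rightarrow> 'a::metric_space"
  assumes "f \<longlonglongrightarrow> l" "(\<lambda>n. dist (g n) (f n)) \<longlonglongrightarrow> 0"
  shows "g \<longlonglongrightarrow> l"
proof -
  have a: "(\<lambda>n. dist (f n) l) \<longlonglongrightarrow> 0" using assms(1) by (rule tendsto_dist_iff[THEN iffD1])
  have b: "(\<lambda>n. dist (g n) (f n) + dist (f n) l) \<longlonglongrightarrow> 0"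
    using tendsto_add[OF assms(2) a] by simp
  have "(\<lambda>n. dist (g n) l) \<longlonglongrightarrow> 0"
  proof (rule tendsto_sandwich[OF _ _ tendsto_const b])
    show "\<forall>\<^sub>F n in sequentially. 0 \<le> dist (g n) l" by simp
    show "\<forall>\<^sub>F n in sequentially. dist (g n) l \<le> dist (g n) (f n) + dist (f n) l"
      by (simp add: dist_triangle)
  qed
  then show ?thesis by (rule tendsto_dist_iff[THEN iffD2])
qed

lemma bary_conv:
  fixes mu :: "'a::complete_space list \<Rightarrow> 'a"
  assumes g: "good k r mu" and r: "0 \<le> r" "r < 1" and xs: "length xs = Suc k" and j: "j < Suc k"
  shows "(\<lambda>m. (barycentric k mu ^^ m) xs ! j) \<longlonglongrightarrow> bext k mu xs"
proof -
  define y where "y m = (barycentric k mu ^^ m) xs" for m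
  have km: "kmean k mu" and ln: "lnonexp k mu" and lc: "lcontr k r mu" using g by (auto simp: good_def)
  have yl: "length (y m) = Suc k" for m unfolding y_def by (rule bary_pow_length[OF xs])
  have yL: "Lsum k (y m) \<le> r ^ m * Lsum k xs" for m unfolding y_def by (rule bary_pow_Lsum[OF lc r(1) xs])
  have ysuc: "y (Suc m) = barycentric k mu (y m)" for m unfolding y_def by simp
  have st: "dist (y m ! 0) (y (Suc m) ! 0) \<le> Lsum k xs * r ^ m" for m
  proof -
    have "dist (y (Suc m) ! 0) (y m ! 0) \<le> Lsum k (y m)"
      unfolding ysuc by (rule bary_step[OF km ln yl]) simp
    then show ?thesis using yL[of m] by (simp add: dist_commute mult.commute)
  qed
  have "convergent (\<lambda>m. y m ! 0)" by (rule geom_conv[OF st r])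
  then have c0: "(\<lambda>m. y m ! 0) \<longlonglongrightarrow> bext k mu xs"
    unfolding bext_def y_def by (simp add: convergent_LIMSEQ_iff)
  have h0: "(\<lambda>m. Lsum k xs * r ^ m) \<longlonglongrightarrow> 0"
    using tendsto_mult[OF tendsto_const LIMSEQ_power_zero[of r], of "Lsum k xs"] r by simp
  have "(\<lambda>m. dist (y m ! j) (y m ! 0)) \<longlonglongrightarrow> 0"
  proof (rule tendsto_sandwich[OF _ _ tendsto_const h0])
    show "\<forall>\<^sub>F m in sequentially. 0 \<le> dist (y m ! j) (y m ! 0)" by simp
    have "dist (y m ! j) (y m ! 0) \<le> Lsum k xs * r ^ m" for m
    proof -
      have "dist (y m ! j) (y m ! 0) \<le> Lsum k (y m)" by (rule dist_le_Lsum[OF yl j]) simp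
      then show ?thesis using yL[of m] by (simp add: mult.commute)
    qed
    then show "\<forall>\<^sub>F m in sequentially. dist (y m ! j) (y m ! 0) \<le> Lsum k xs * r ^ m" by simp
  qed
  then have "(\<lambda>m. y m ! j) \<longlonglongrightarrow> bext k mu xs" by (rule tendsto_close[OF c0])
  then show ?thesis unfolding y_def .
qed

lemma rem_replicate: "j < Suc k \<Longrightarrow> rem j (replicate (Suc k) x) = replicate k x"
  by (rule nth_equalityI) (simp_all add: rem_nth del: replicate_Suc)

lemma bary_replicate:
  assumes "kmean k mu" shows "barycentric k mu (replicate (Suc k) x) = replicate (Suc k) x"
proof (rule nth_equalityI)
  show "length (barycentric k mu (replicate (Suc k) x)) = length (replicate (Suc k) x)"
    by (simp add: bary_length)
  fix j assume "j < length (barycentric k mu (replicate (Suc k) x))"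
  then have j: "j < Suc k" by (simp add: bary_length)
  show "barycentric k mu (replicate (Suc k) x) ! j = replicate (Suc k) x ! j"
    using j assms by (simp add: bary_nth rem_replicate kmean_def del: replicate_Suc)
qed

lemma bext_good:
  fixes mu :: "'a::complete_space list \<Rightarrow> 'a"
  assumes g: "good k r mu" and r: "0 \<le> r" "r < 1"
  shows "beta_extends k mu (bext k mu) \<and> good (Suc k) r (bext k mu)"
proof -
  have km: "kmean k mu" and ln: "lnonexp k mu" and lc: "lcontr k r mu" using g by (auto simp: good_def)
  have K: "kmean (Suc k) (bext k mu)" unfolding kmean_def
  proof
    fix x
    have "(barycentric k mu ^^ m) (replicate (Suc k) x) = replicate (Suc k) x" for m
      by (induction m) (simp_all add: bary_replicate[OF km] del: replicate_Suc)
    then show "bext k mu (replicate (Suc k) x) = x" by (simp add: bext_def del: replicate_Suc)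
  qed
  have conv: "(\<lambda>m. (barycentric k mu ^^ m) xs ! j) \<longlonglongrightarrow> bext k mu xs"
    if "length xs = Suc k" "j < Suc k" for xs j
    by (rule bary_conv[OF g r that])
  have BE: "beta_extends k mu (bext k mu)"
    unfolding beta_extends_def using K conv by blast
  have N: "lnonexp (Suc k) (bext k mu)" unfolding lnonexp_def
  proof (intro allI impI)
    fix xs ys :: "'a list" and \<delta> :: real
    assume xs: "length xs = Suc k" and ys: "length ys = Suc k" and d: "\<forall>i<Suc k. dist (xs ! i) (ys ! i) \<le> \<delta>"
    have tl: "(\<lambda>m. dist ((barycentric k mu ^^ m) xs ! 0) ((barycentric k mu ^^ m) ys ! 0)) \<longlonglongrightarrow> dist (bext k mu xs) (bext k mu ys)"
      by (rule tendsto_dist[OF conv[OF xs] conv[OF ys]]) simp_all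
    have le: "dist ((barycentric k mu ^^ m) xs ! 0) ((barycentric k mu ^^ m) ys ! 0) \<le> \<delta>" for m
      using bary_pow_nonexp[OF ln xs ys d, of m] by simp
    show "dist (bext k mu xs) (bext k mu ys) \<le> \<delta>"
      by (rule LIMSEQ_le_const2[OF tl]) (use le in auto)
  qed
  have C: "lcontr (Suc k) r (bext k mu)" unfolding lcontr_def
  proof (intro allI impI)
    fix xs ys :: "'a list" and p
    assume xs: "length xs = Suc k" and ys: "length ys = Suc k" and p: "p < Suc k"
      and e: "\<forall>i<Suc k. i \<noteq> p \<longrightarrow> xs ! i = ys ! i"
    have b1: "\<forall>j<Suc k. dist (barycentric k mu xs ! j) (barycentric k mu ys ! j) \<le> r * dist (xs!p) (ys!p)"
      by (rule bary_contr[OF lc r(1) xs ys p e])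
    have bl: "length (barycentric k mu xs) = Suc k" "length (barycentric k mu ys) = Suc k"
      by (simp_all add: bary_length)
    have fs: "(barycentric k mu ^^ m) (barycentric k mu zs) = (barycentric k mu ^^ Suc m) zs" for m zs
      by (simp add: funpow_Suc_right del: funpow.simps)
    have le: "dist ((barycentric k mu ^^ Suc m) xs ! 0) ((barycentric k mu ^^ Suc m) ys ! 0) \<le> r * dist (xs!p) (ys!p)" for m
      using bary_pow_nonexp[OF ln bl b1, of m] unfolding fs by simp
    have tl: "(\<lambda>m. dist ((barycentric k mu ^^ Suc m) xs ! 0) ((barycentric k mu ^^ Suc m) ys ! 0)) \<longlonglongrightarrow> dist (bext k mu xs) (bext k mu ys)"
      by (rule tendsto_dist[OF LIMSEQ_Suc[OF conv[OF xs]] LIMSEQ_Suc[OF conv[OF ys]]]) simp_all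
    show "dist (bext k mu xs) (bext k mu ys) \<le> r * dist (xs!p) (ys!p)"
      by (rule LIMSEQ_le_const2[OF tl]) (use le in auto)
  qed
  show ?thesis using BE K N C by (simp add: good_def)
qed

fun Mseq :: "('a::complete_space list \<Rightarrow> 'a) \<Rightarrow> nat \<Rightarrow> 'a list \<Rightarrow> 'a" where
  "Mseq f 0 = f"
| "Mseq f (Suc i) = bext (Suc (Suc i)) (Mseq f i)"

lemma Mseq_good:
  assumes "good 2 r f" "0 \<le> r" "r < 1"
  shows "good (Suc (Suc i)) r (Mseq f i)"
proof (induction i)
  case 0 then show ?case using assms(1) by (simp add: numeral_2_eq_2)
next
  case (Suc i)
  then show ?case using bext_good[OF Suc.IH assms(2,3)] by simp
qed

lemma Mseq_ext:
  assumes "good 2 r f" "0 \<le> r" "r < 1"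
  shows "beta_extends (Suc (Suc i)) (Mseq f i) (Mseq f (Suc i))"
  using bext_good[OF Mseq_good[OF assms, of i] assms(2,3)] by simp

lemma good2:
  fixes mu :: "'a::complete_space \<Rightarrow> 'a \<Rightarrow> 'a"
  assumes "mean2 mu" "nonexpansive2 mu" "coord_contractive2 r mu"
  shows "good 2 r (list_of_mean2 mu)"
proof -
  have K: "kmean 2 (list_of_mean2 mu)"
    using assms(1) by (simp add: kmean_def list_of_mean2_def mean2_def numeral_2_eq_2)
  have N: "lnonexp 2 (list_of_mean2 mu)" unfolding lnonexp_def
  proof (intro allI impI)
    fix xs ys :: "'a list" and \<delta> :: real
    assume "length xs = 2" "length ys = 2" and d: "\<forall>i<2. dist (xs ! i) (ys ! i) \<le> \<delta>"
    have "dist (mu (xs!0) (xs!1)) (mu (ys!0) (ys!1)) \<le> max (dist (xs!0) (ys!0)) (dist (xs!1) (ys!1))"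
      using assms(2) by (simp add: nonexpansive2_def)
    moreover have "dist (xs!0) (ys!0) \<le> \<delta>" "dist (xs!1) (ys!1) \<le> \<delta>" using d by auto
    ultimately show "dist (list_of_mean2 mu xs) (list_of_mean2 mu ys) \<le> \<delta>"
      by (simp add: list_of_mean2_def)
  qed
  have C: "lcontr 2 r (list_of_mean2 mu)" unfolding lcontr_def
  proof (intro allI impI)
    fix xs ys :: "'a list" and p :: nat
    assume "length xs = 2" "length ys = 2" and p: "p < 2" and e: "\<forall>i<2. i \<noteq> p \<longrightarrow> xs ! i = ys ! i"
    have c1: "dist (mu x z) (mu y z) \<le> r * dist x y" and c2: "dist (mu z x) (mu z y) \<le> r * dist x y" for x y z
      using assms(3) by (simp_all add: coord_contractive2_def)
    show "dist (list_of_mean2 mu xs) (list_of_mean2 mu ys) \<le> r * dist (xs ! p) (ys ! p)"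
    proof (cases "p = 0")
      case True
      then have "xs!1 = ys!1" using e by auto
      then show ?thesis using True c1[where x="xs!0" and y="ys!0" and z="xs!1"] by (simp add: list_of_mean2_def)
    next
      case False
      then have p1: "p = 1" using p by simp
      then have "xs!0 = ys!0" using e by auto
      then show ?thesis using p1 c2[where x="xs!1" and y="ys!1" and z="xs!0"] by (simp add: list_of_mean2_def)
    qed
  qed
  show ?thesis using K N C by (simp add: good_def)
qed

lemma beta_all:
  fixes mu :: "'a::complete_space \<Rightarrow> 'a \<Rightarrow> 'a"
  assumes "mean2 mu" "nonexpansive2 mu" "coord_contractive2 r mu" "0 \<le> r" "r < 1"
  shows "beta_extends_all mu"
proof -
  define f where "f = list_of_mean2 mu"
  have g: "good 2 r f" unfolding f_def by (rule good2[OF assms(1-3)])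
  define M where "M n = Mseq f (n - 2)" for n
  have "beta_extends 2 f (M 3)"
    using Mseq_ext[OF g assms(4,5), of 0] by (simp add: M_def numeral_2_eq_2 numeral_3_eq_3)
  moreover have "beta_extends n (M n) (M (Suc n))" if "n \<ge> 3" for n
  proof -
    obtain i where n: "n = Suc (Suc i)" using \<open>n \<ge> 3\<close> by (metis add_2_eq_Suc le_Suc_ex numeral_3_eq_3 le_SucE numeral_2_eq_2 Suc_leD)
    show ?thesis using Mseq_ext[OF g assms(4,5), of i] by (simp add: M_def n)
  qed
  ultimately show ?thesis unfolding beta_extends_all_def f_def by blast
qed

lemma stepD:
  assumes lm: "mean2 lam" and ln: "nonexpansive2 lam" and nm: "mean2 nu" and nc: "coord_contractive2 r nu"
  shows "dist (lam a b) (nu a b) \<le> r * dist a b"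
proof -
  let ?e = "nu a b"
  have "dist (lam a b) (lam ?e ?e) \<le> max (dist a ?e) (dist b ?e)"
    using ln[unfolded nonexpansive2_def, rule_format, of a b ?e ?e] .
  moreover have "lam ?e ?e = ?e" using lm by (simp add: mean2_def)
  moreover have "dist (nu a a) (nu a b) \<le> r * dist a b" using nc by (simp add: coord_contractive2_def)
  moreover have "dist (nu b b) (nu a b) \<le> r * dist b a" using nc by (simp add: coord_contractive2_def)
  moreover have "nu a a = a" "nu b b = b" using nm by (simp_all add: mean2_def)
  ultimately show ?thesis by (simp add: dist_commute)
qed

lemma stepA:
  assumes lm: "mean2 lam" and ln: "nonexpansive2 lam"
  shows "dist (lam a b) a \<le> dist a b"
proof -
  have "dist (lam a b) (lam a a) \<le> max (dist a a) (dist b a)"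
    using ln[unfolded nonexpansive2_def, rule_format, of a b a a] .
  moreover have "lam a a = a" using lm by (simp add: mean2_def)
  ultimately show ?thesis by (simp add: dist_commute)
qed

lemma stepB:
  assumes nm: "mean2 nu" and nn: "nonexpansive2 nu"
  shows "dist (nu a b) b \<le> dist a b"
proof -
  have "dist (nu a b) (nu b b) \<le> max (dist a b) (dist b b)"
    using nn[unfolded nonexpansive2_def, rule_format, of a b b b] .
  moreover have "nu b b = b" using nm by (simp add: mean2_def)
  ultimately show ?thesis by simp
qed

lemma stepE:
  assumes nm: "mean2 nu" and nc: "coord_contractive2 r nu"
  shows "dist a (nu a b) \<le> r * dist a b"
proof -
  have "dist (nu a a) (nu a b) \<le> r * dist a b" using nc by (simp add: coord_contractive2_def)
  moreover have "nu a a = a" using nm by (simp add: mean2_def)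
  ultimately show ?thesis by simp
qed

theorem proposition6p4:
  fixes lam nu :: "'a::complete_space \<Rightarrow> 'a \<Rightarrow> 'a" and \<rho>' :: real
  assumes "convex_mean lam"
    and "mean2 nu" and "nonexpansive2 nu" and "0 < \<rho>'" and "\<rho>' < 1"
    and "coord_contractive2 \<rho>' nu"
  shows "(\<exists>mu. is_iter_limit (itcomp lam nu) mu \<and> mean2 mu \<and> nonexpansive2 mu \<and>
             coord_contractive2 (max (1/2) \<rho>') mu \<and> beta_extends_all mu)
       \<and> (\<exists>mu. is_iter_limit (itcomp_skew lam nu) mu \<and> mean2 mu \<and> nonexpansive2 mu \<and>
             coord_contractive2 (max (1/2) \<rho>') mu \<and> beta_extends_all mu)"
proof -
  define \<rho> where "\<rho> = max (1/2) \<rho>'"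
  have r0: "0 \<le> \<rho>" "\<rho> < 1" using assms(4,5) by (auto simp: \<rho>_def)
  have lm: "mean2 lam" using assms(1) by (simp add: convex_mean_def)
  have ln: "nonexpansive2 lam" by (rule convex_nonexp[OF assms(1)])
  have lc: "coord_contractive2 \<rho> lam" by (rule cc_mono[OF convex_cc[OF assms(1)]]) (simp add: \<rho>_def)
  have nc: "coord_contractive2 \<rho> nu" by (rule cc_mono[OF assms(6)]) (simp add: \<rho>_def)
  have rp: "0 \<le> \<rho>'" using assms(4) by simp
  have main: "\<exists>mu. is_iter_limit s mu \<and> mean2 mu \<and> nonexpansive2 mu \<and> coord_contractive2 \<rho> mu \<and> beta_extends_all mu"
    if D: "\<And>n x y. dist (fst (s (Suc n) x y)) (snd (s (Suc n) x y)) \<le> \<rho>' * dist (fst (s n x y)) (snd (s n x y))"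
    and A: "\<And>n x y. dist (fst (s (Suc n) x y)) (fst (s n x y)) \<le> dist (fst (s n x y)) (snd (s n x y))"
    and B: "\<And>n x y. dist (snd (s (Suc n) x y)) (snd (s n x y)) \<le> dist (fst (s n x y)) (snd (s n x y))"
    and P: "\<And>n. nonexpansive2 (\<lambda>x y. fst (s n x y)) \<and> coord_contractive2 \<rho> (\<lambda>x y. fst (s n x y))"
    and dg: "\<And>n x. fst (s n x x) = x"
    for s :: "nat \<Rightarrow> 'a \<Rightarrow> 'a \<Rightarrow> 'a \<times> 'a"
  proof -
    obtain mu where mu: "is_iter_limit s mu" "mean2 mu" "nonexpansive2 mu" "coord_contractive2 \<rho> mu"
      using limit_mean[where s=s and r'="\<rho>'" and r="\<rho>", OF D A B rp assms(5) P dg] by blast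
    have "beta_extends_all mu" by (rule beta_all[OF mu(2-4) r0])
    then show ?thesis using mu by blast
  qed
  have m1: "\<exists>mu. is_iter_limit (itcomp lam nu) mu \<and> mean2 mu \<and> nonexpansive2 mu \<and> coord_contractive2 \<rho> mu \<and> beta_extends_all mu"
  proof (rule main)
    fix n x y
    let ?a = "fst (itcomp lam nu n x y)" and ?b = "snd (itcomp lam nu n x y)"
    show "dist (fst (itcomp lam nu (Suc n) x y)) (snd (itcomp lam nu (Suc n) x y)) \<le> \<rho>' * dist ?a ?b"
      unfolding itcomp_Suc' fst_conv snd_conv by (rule stepD[OF lm ln assms(2) assms(6)])
    show "dist (fst (itcomp lam nu (Suc n) x y)) ?a \<le> dist ?a ?b"
      unfolding itcomp_Suc' fst_conv snd_conv by (rule stepA[OF lm ln])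
    show "dist (snd (itcomp lam nu (Suc n) x y)) ?b \<le> dist ?a ?b"
      unfolding itcomp_Suc' fst_conv snd_conv by (rule stepB[OF assms(2,3)])
  next
    fix n
    show "nonexpansive2 (\<lambda>x y. fst (itcomp lam nu n x y)) \<and> coord_contractive2 \<rho> (\<lambda>x y. fst (itcomp lam nu n x y))"
      using itcomp_props[OF ln lc assms(3) nc, of n] by simp
  next
    fix n x
    show "fst (itcomp lam nu n x x) = x" using itcomp_diag[OF lm assms(2)] by simp
  qed
  have m2: "\<exists>mu. is_iter_limit (itcomp_skew lam nu) mu \<and> mean2 mu \<and> nonexpansive2 mu \<and> coord_contractive2 \<rho> mu \<and> beta_extends_all mu"
  proof (rule main)
    fix n x y
    let ?a = "fst (itcomp_skew lam nu n x y)" and ?b = "snd (itcomp_skew lam nu n x y)"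
    have e: "dist ?a (nu ?a ?b) \<le> \<rho>' * dist ?a ?b" by (rule stepE[OF assms(2,6)])
    have "dist (lam ?a (nu ?a ?b)) ?a \<le> dist ?a (nu ?a ?b)" by (rule stepA[OF lm ln])
    moreover have "dist ?a (nu ?a ?b) \<le> dist ?a ?b"
      using e assms(5) mult_right_mono[of "\<rho>'" 1 "dist ?a ?b"] by simp
    ultimately show "dist (fst (itcomp_skew lam nu (Suc n) x y)) ?a \<le> dist ?a ?b"
      unfolding itcomp_skew_Suc' fst_conv snd_conv by linarith
    have "dist (lam ?a (nu ?a ?b)) (lam (nu ?a ?b) (nu ?a ?b)) \<le> max (dist ?a (nu ?a ?b)) (dist (nu ?a ?b) (nu ?a ?b))"
      using ln[unfolded nonexpansive2_def, rule_format, of ?a "nu ?a ?b" "nu ?a ?b" "nu ?a ?b"] .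
    moreover have "lam (nu ?a ?b) (nu ?a ?b) = nu ?a ?b" using lm by (simp add: mean2_def)
    ultimately show "dist (fst (itcomp_skew lam nu (Suc n) x y)) (snd (itcomp_skew lam nu (Suc n) x y)) \<le> \<rho>' * dist ?a ?b"
      unfolding itcomp_skew_Suc' fst_conv snd_conv using e by simp
    show "dist (snd (itcomp_skew lam nu (Suc n) x y)) ?b \<le> dist ?a ?b"
      unfolding itcomp_skew_Suc' fst_conv snd_conv by (rule stepB[OF assms(2,3)])
  next
    fix n
    show "nonexpansive2 (\<lambda>x y. fst (itcomp_skew lam nu n x y)) \<and> coord_contractive2 \<rho> (\<lambda>x y. fst (itcomp_skew lam nu n x y))"
      using itcomp_skew_props[OF ln lc assms(3) nc, of n] by simp
  next
    fix n x
    show "fst (itcomp_skew lam nu n x x) = x" using itcomp_skew_diag[OF lm assms(2)] by simp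
  qed
  show ?thesis using m1 m2 unfolding \<rho>_def by (rule conjI)
qed

end
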